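(* Let $\mu>0$, let $0<j_1<j_2$ be the two smallest positive zeros of the Bessel function $J_1$, and let $\rho>(j_2/j_1)^2$. Then there exists $\omega$ with $j_1\sqrt{\mu/\rho}<\omega<j_2\sqrt{\mu/\rho}$ (in particular $j_1^2\mu\le\rho\omega^2\le j_2^2\mu$) such that $$\det\begin{pmatrix} J_1\big(\omega\sqrt{1/\mu}\big) & J_1\big(\omega\sqrt{\rho/\mu}\big)\\ \omega\sqrt{1/\mu}\,J_1'\big(\omega\sqrt{1/\mu}\big) & \omega\sqrt{\rho/\mu}\,J_1'\big(\omega\sqrt{\rho/\mu}\big)\end{pmatrix}=0 .$$ Consequently, any family of such roots $\omega=\omega(\rho)$ satisfies $\rho\,\omega(\rho)^4\to0$ as $\rho\to\infty$.
   Context: $J_1$ denotes the Bessel function of the first kind of order one and $J_1'$ its derivative. *)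

theory Defs
  imports "HOL-Analysis.Analysis"
begin

definition bessel_J1 :: "real \<Rightarrow> real" where
  "bessel_J1 x = (\<Sum>m. (-1) ^ m / (fact m * fact (m + 1)) * (x / 2) ^ (2 * m + 1))"

definition bessel_J1' :: "real \<Rightarrow> real" where
  "bessel_J1' x = deriv bessel_J1 x"

definition bessel_det :: "real \<Rightarrow> real \<Rightarrow> real \<Rightarrow> real" where
  "bessel_det \<mu> \<rho> \<omega> =
     (let a = \<omega> * sqrt (1 / \<mu>); b = \<omega> * sqrt (\<rho> / \<mu>)
      in bessel_J1 a * (b * bessel_J1' b) - bessel_J1 b * (a * bessel_J1' a))"

end

theory Submission imports Defs begin

definition Ac :: "nat \<Rightarrow> real" where
  "Ac n = (if odd n then (-1)^(n div 2) / (fact (n div 2) * fact (n div 2 + 1) * 2^n) else 0)"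
definition Bc :: "nat \<Rightarrow> real" where
  "Bc n = (if even n then (-1)^(n div 2) / (fact (n div 2) * fact (n div 2) * 2^n) else 0)"

lemma fact_bound_odd: "fact (2*m+1) \<le> (2::nat)^(2*m+1) * fact m * fact (m+1)"
proof -
  have e: "2*m+1-m = m+1" by simp
  have "fact (2*m+1) = fact m * fact (m+1) * ((2*m+1) choose m)"
    using binomial_fact_lemma[of m "2*m+1"] unfolding e by simp
  also have "\<dots> \<le> fact m * fact (m+1) * 2^(2*m+1)"
    by (rule mult_le_mono2) (rule binomial_le_pow2)
  finally show ?thesis by (simp add: mult_ac)
qed

lemma fact_bound_even: "fact (2*m) \<le> (2::nat)^(2*m) * fact m * fact m"
proof -
  have e: "2*m-m = m" by simp
  have "fact (2*m) = fact m * fact m * ((2*m) choose m)"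
    using binomial_fact_lemma[of m "2*m"] unfolding e by simp
  also have "\<dots> \<le> fact m * fact m * 2^(2*m)"
    by (rule mult_le_mono2) (rule binomial_le_pow2)
  finally show ?thesis by (simp add: mult_ac)
qed

lemma Ac_bound: "\<bar>Ac n\<bar> \<le> 1 / fact n"
proof (cases "odd n")
  case True
  then obtain m where n: "n = 2*m+1" by (metis oddE)
  have "real (fact (2*m+1)) \<le> real (2^(2*m+1) * fact m * fact (m+1))"
    by (simp only: of_nat_le_iff fact_bound_odd)
  hence le: "(fact (2*m+1)::real) \<le> fact m * fact (m+1) * 2^(2*m+1)"
    unfolding of_nat_mult of_nat_power of_nat_fact by (simp add: mult_ac)
  have "\<bar>Ac n\<bar> = 1 / (fact m * fact (m+1) * 2^(2*m+1))"
    using n by (simp add: Ac_def abs_mult power_abs)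
  also have "\<dots> \<le> 1 / fact n" using le n
    by (intro divide_left_mono) auto
  finally show ?thesis .
qed (simp add: Ac_def)

lemma Bc_bound: "\<bar>Bc n\<bar> \<le> 1 / fact n"
proof (cases "even n")
  case True
  then obtain m where n: "n = 2*m" by (metis evenE)
  have "real (fact (2*m)) \<le> real (2^(2*m) * fact m * fact m)"
    by (simp only: of_nat_le_iff fact_bound_even)
  hence le: "(fact (2*m)::real) \<le> fact m * fact m * 2^(2*m)"
    unfolding of_nat_mult of_nat_power of_nat_fact by (simp add: mult_ac)
  have "\<bar>Bc n\<bar> = 1 / (fact m * fact m * 2^(2*m))"
    using n by (simp add: Bc_def abs_mult power_abs)
  also have "\<dots> \<le> 1 / fact n" using le n
    by (intro divide_left_mono) auto
  finally show ?thesis .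
qed (simp add: Bc_def)

lemma summable_bound:
  assumes "\<And>n. \<bar>c n\<bar> \<le> 1 / fact n"
  shows "summable (\<lambda>n. c n * (x::real)^n)"
proof (rule summable_comparison_test)
  show "summable (\<lambda>n. \<bar>x\<bar>^n /\<^sub>R fact n)" by (rule summable_exp_generic)
  show "\<exists>N. \<forall>n\<ge>N. norm (c n * x^n) \<le> \<bar>x\<bar>^n /\<^sub>R fact n"
  proof (intro exI allI impI)
    fix n
    have "\<bar>c n\<bar> * \<bar>x\<bar>^n \<le> 1 / fact n * \<bar>x\<bar>^n"
      by (intro mult_right_mono assms) auto
    thus "norm (c n * x^n) \<le> \<bar>x\<bar>^n /\<^sub>R fact n"
      by (simp add: abs_mult power_abs divide_inverse mult.commute)
  qed
qed

lemma sumA: "summable (\<lambda>n. Ac n * (x::real)^n)" by (rule summable_bound[OF Ac_bound])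
lemma sumB: "summable (\<lambda>n. Bc n * (x::real)^n)" by (rule summable_bound[OF Bc_bound])

lemma J1_eq: "bessel_J1 x = (\<Sum>n. Ac n * x^n)"
proof -
  have sm: "strict_mono (\<lambda>m::nat. 2*m+1)" by (rule strict_monoI) simp
  have z: "\<And>n. n \<notin> range (\<lambda>m::nat. 2*m+1) \<Longrightarrow> Ac n * x^n = 0"
    by (auto simp: Ac_def elim!: oddE)
  have "(\<lambda>n. Ac n * x^n) sums (\<Sum>n. Ac n * x^n)" using sumA by (rule summable_sums)
  hence "(\<lambda>m. Ac (2*m+1) * x^(2*m+1)) sums (\<Sum>n. Ac n * x^n)"
    using sums_mono_reindex[OF sm, of "\<lambda>n. Ac n * x^n"] z by blast
  moreover have "\<And>m. Ac (2*m+1) * x^(2*m+1) = (-1) ^ m / (fact m * fact (m + 1)) * (x / 2) ^ (2 * m + 1)"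
    by (simp add: Ac_def power_divide)
  ultimately show ?thesis unfolding bessel_J1_def by (simp add: sums_iff)
qed

definition J1d :: "real \<Rightarrow> real" where "J1d x = (\<Sum>n. diffs Ac n * x^n)"
definition J0 :: "real \<Rightarrow> real" where "J0 x = (\<Sum>n. Bc n * x^n)"

lemma J1_fun: "bessel_J1 = (\<lambda>x. \<Sum>n. Ac n * x^n)" using J1_eq by blast

lemma DJ1: "(bessel_J1 has_real_derivative J1d x) (at x)"
  unfolding J1_fun J1d_def by (rule termdiffs_strong_converges_everywhere[OF sumA])

lemma J1'_eq: "bessel_J1' x = J1d x"
  unfolding bessel_J1'_def using DJ1 by (rule DERIV_imp_deriv)

lemma sumdA: "summable (\<lambda>n. diffs Ac n * (x::real)^n)"
  by (rule termdiff_converges_all[OF sumA])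

lemma DJ1d: "(J1d has_real_derivative (\<Sum>n. diffs (diffs Ac) n * x^n)) (at x)"
  unfolding J1d_def fun_eq_iff by (rule termdiffs_strong_converges_everywhere[OF sumdA])

lemma aux1: "(q::real) > 0 \<Longrightarrow> F > 0 \<Longrightarrow> p > 0 \<Longrightarrow>
   (2*q) * (-s) / ((q*F) * (q*F) * (2*p)) = - (s / (F * (q*F) * p))"
  by (simp add: field_simps)

lemma aux2: "(q::real) > 0 \<Longrightarrow> F > 0 \<Longrightarrow> r > 0 \<Longrightarrow>
   (2*q) * s / (F * (q*F) * (2*r)) = s / (F * F * r)"
  by (simp add: field_simps)

lemma diffsB: "diffs Bc n = - Ac n"
proof (cases "odd n")
  case True
  then obtain m where n: "n = 2*m+1" by (metis oddE)
  have s: "Suc n = 2*(m+1)" using n by simp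
  have "diffs Bc n = (2*(real m+1)) * (-((-1)^m)) / (((real m+1)*fact m) * ((real m+1)*fact m) * (2*2^(2*m+1)))"
    unfolding diffs_def s by (simp add: Bc_def fact_Suc power_add mult_ac add_ac)
  also have "\<dots> = - ((-1)^m / (fact m * ((real m+1)*fact m) * 2^(2*m+1)))"
    by (rule aux1) auto
  also have "\<dots> = - Ac n" using n by (simp add: Ac_def fact_Suc mult_ac)
  finally show ?thesis .
next
  case False
  thus ?thesis by (simp add: diffs_def Bc_def Ac_def)
qed

lemma DJ0: "(J0 has_real_derivative - bessel_J1 x) (at x)"
proof -
  have "(J0 has_real_derivative (\<Sum>n. diffs Bc n * x^n)) (at x)"
    unfolding J0_def fun_eq_iff by (rule termdiffs_strong_converges_everywhere[OF sumB])
  moreover have "(\<Sum>n. diffs Bc n * x^n) = - bessel_J1 x"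
    unfolding diffsB J1_eq using suminf_minus[OF sumA[of x]] by simp
  ultimately show ?thesis by simp
qed

lemma coefrel: "(1 + real n) * Ac n = (if n = 0 then 0 else Bc (n - 1))"
proof (cases "odd n")
  case True
  then obtain m where n: "n = 2*m+1" by (metis oddE)
  have "(1 + real n) * Ac n = (2*(real m+1)) * (-1)^m / (fact m * ((real m+1)*fact m) * (2*2^(2*m)))"
    using n by (simp add: Ac_def fact_Suc mult_ac add_ac)
  also have "\<dots> = (-1)^m / (fact m * fact m * 2^(2*m))"
    by (rule aux2) auto
  also have "\<dots> = (if n = 0 then 0 else Bc (n - 1))" using n by (simp add: Bc_def)
  finally show ?thesis .
next
  case False
  then show ?thesis by (cases n) (auto simp: Bc_def Ac_def)
qed

lemma rel: "x * J1d x + bessel_J1 x = x * J0 x"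
proof -
  have "(\<lambda>n. x * (diffs Ac n * x^n)) sums (x * J1d x)"
    unfolding J1d_def by (rule sums_mult[OF summable_sums[OF sumdA]])
  hence "(\<lambda>n. (\<lambda>n. real n * Ac n * x^n) (Suc n)) sums (x * J1d x)"
    by (simp add: diffs_def mult_ac)
  hence s1: "(\<lambda>n. real n * Ac n * x^n) sums (x * J1d x)"
    by (subst (asm) sums_Suc_iff) simp
  have "(\<lambda>n. x * (Bc n * x^n)) sums (x * J0 x)"
    unfolding J0_def by (rule sums_mult[OF summable_sums[OF sumB]])
  hence "(\<lambda>n. (\<lambda>n. (if n = 0 then 0 else Bc (n - 1)) * x^n) (Suc n)) sums (x * J0 x)"
    by (simp add: mult_ac)
  hence s2: "(\<lambda>n. (if n = 0 then 0 else Bc (n - 1)) * x^n) sums (x * J0 x)"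
    by (subst (asm) sums_Suc_iff) simp
  have "(\<lambda>n. real n * Ac n * x^n + Ac n * x^n) sums (x * J1d x + bessel_J1 x)"
    unfolding J1_eq by (rule sums_add[OF s1 summable_sums[OF sumA]])
  moreover have "(\<lambda>n. real n * Ac n * x^n + Ac n * x^n) = (\<lambda>n. (if n = 0 then 0 else Bc (n - 1)) * x^n)"
  proof
    fix n
    have "real n * Ac n * x^n + Ac n * x^n = ((1 + real n) * Ac n) * x^n" by (simp add: algebra_simps)
    thus "real n * Ac n * x^n + Ac n * x^n = (if n = 0 then 0 else Bc (n - 1)) * x^n" by (simp only: coefrel)
  qed
  ultimately show ?thesis using s2 sums_unique2 by metis
qed

lemma contJ1: "continuous_on S bessel_J1"
  using DJ1 by (meson DERIV_isCont continuous_at_imp_continuous_on)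
lemma contJ1d: "continuous_on S J1d"
  using DJ1d by (meson DERIV_isCont continuous_at_imp_continuous_on)
lemma contJ1_comp[continuous_intros]: "continuous_on S f \<Longrightarrow> continuous_on S (\<lambda>x. bessel_J1 (f x))"
  by (rule continuous_on_compose2[OF contJ1]) auto
lemma contJ1d_comp[continuous_intros]: "continuous_on S f \<Longrightarrow> continuous_on S (\<lambda>x. J1d (f x))"
  by (rule continuous_on_compose2[OF contJ1d]) auto

lemma energy_mono:
  assumes "0 \<le> a" "a \<le> b"
  shows "a^2 * (J0 a ^2 + bessel_J1 a ^2) \<le> b^2 * (J0 b ^2 + bessel_J1 b ^2)"
proof (rule DERIV_nonneg_imp_nondecreasing[OF assms(2)])
  fix x assume x: "a \<le> x" "x \<le> b"
  have d: "((\<lambda>x. x^2 * (J0 x ^2 + bessel_J1 x ^2)) has_real_derivative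
      (2 * x) * (J0 x ^2 + bessel_J1 x ^2) + x^2 * (2 * J0 x * (- bessel_J1 x) + 2 * bessel_J1 x * J1d x)) (at x)"
    by (auto intro!: derivative_eq_intros DJ0 DJ1 simp: power2_eq_square algebra_simps)
  have "(2 * x) * (J0 x ^2 + bessel_J1 x ^2) + x^2 * (2 * J0 x * (- bessel_J1 x) + 2 * bessel_J1 x * J1d x)
      = 2 * x * J0 x ^2 + 2 * x * bessel_J1 x * (x * J1d x + bessel_J1 x - x * J0 x)"
    by (simp add: power2_eq_square algebra_simps)
  also have "\<dots> = 2 * x * J0 x ^2" using rel[of x] by simp
  also have "\<dots> \<ge> 0" using x assms by simp
  finally show "\<exists>y. ((\<lambda>x. x^2 * (J0 x ^2 + bessel_J1 x ^2)) has_real_derivative y) (at x) \<and> y \<ge> 0"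
    using d by blast
qed

lemma simple_zero:
  assumes "j > 0" "bessel_J1 j = 0" "J1d j = 0" "0 < x" "x \<le> j"
  shows "bessel_J1 x = 0"
proof -
  have "J0 j = 0" using rel[of j] assms by simp
  hence "x^2 * (J0 x ^2 + bessel_J1 x ^2) \<le> 0"
    using energy_mono[of x j] assms by simp
  moreover have "x^2 > 0" using assms by simp
  ultimately have "J0 x ^2 + bessel_J1 x ^2 \<le> 0"
    by (simp add: mult_le_0_iff)
  thus ?thesis by (smt (verit) zero_le_power2 power2_less_eq_zero_iff)
qed

lemma J1_0: "bessel_J1 0 = 0" by (simp add: J1_eq Ac_def)
lemma J1d_0: "J1d 0 = 1/2" by (simp add: J1d_def Ac_def diffs_def)

locale zeros =
  fixes j1 j2 :: real
  assumes j1: "0 < j1" and j12: "j1 < j2"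
    and z1: "bessel_J1 j1 = 0" and z2: "bessel_J1 j2 = 0"
    and nz: "\<forall>x. 0 < x \<and> x < j2 \<and> x \<noteq> j1 \<longrightarrow> bessel_J1 x \<noteq> 0"
begin

lemma pos: "0 < x \<Longrightarrow> x < j1 \<Longrightarrow> bessel_J1 x > 0"
proof (rule ccontr)
  assume x: "0 < x" "x < j1" and n: "\<not> bessel_J1 x > 0"
  obtain d where d: "d > 0" "\<And>h. h > 0 \<Longrightarrow> h < d \<Longrightarrow> bessel_J1 0 < bessel_J1 (0 + h)"
    using DERIV_pos_inc_right[OF DJ1[of 0]] J1d_0 by auto
  define h where "h = min x d / 2"
  have h: "0 < h" "h < d" "h \<le> x" using x d by (auto simp: h_def)
  have "bessel_J1 h > 0" using d(2)[OF h(1,2)] J1_0 by simp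
  then obtain z where z: "h \<le> z" "z \<le> x" "bessel_J1 z = 0"
    using IVT2'[of bessel_J1 x 0 h] n h contJ1 by force
  thus False using nz h x j1 j12 by force
qed

lemma d1: "J1d j1 < 0"
proof -
  have "J1d j1 \<noteq> 0"
  proof
    assume "J1d j1 = 0"
    hence "bessel_J1 (j1/2) = 0" using simple_zero[of j1 "j1/2"] j1 z1 by simp
    thus False using pos[of "j1/2"] j1 by simp
  qed
  moreover have "\<not> J1d j1 > 0"
  proof
    assume "J1d j1 > 0"
    then obtain d where d: "d > 0" "\<And>h. h > 0 \<Longrightarrow> h < d \<Longrightarrow> bessel_J1 (j1 - h) < bessel_J1 j1"
      using DERIV_pos_inc_left[OF DJ1[of j1]] by auto
    define h where "h = min j1 d / 2"
    have h: "0 < h" "h < d" "h < j1" using j1 d by (auto simp: h_def)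
    show False using d(2)[OF h(1,2)] pos[of "j1 - h"] h z1 by simp
  qed
  ultimately show ?thesis by linarith
qed

lemma neg: "j1 < x \<Longrightarrow> x < j2 \<Longrightarrow> bessel_J1 x < 0"
proof (rule ccontr)
  assume x: "j1 < x" "x < j2" and n: "\<not> bessel_J1 x < 0"
  obtain d where d: "d > 0" "\<And>h. h > 0 \<Longrightarrow> h < d \<Longrightarrow> bessel_J1 j1 > bessel_J1 (j1 + h)"
    using DERIV_neg_dec_right[OF DJ1[of j1] d1] by auto
  define h where "h = min (x - j1) d / 2"
  have hh: "0 < h" "h < d" "h \<le> (x - j1) / 2" using x d unfolding h_def by auto
  have "2 * h \<le> x - j1" using hh(3) by simp
  hence h: "0 < h" "h < d" "j1 + h \<le> x" using hh by linarith+
  have "bessel_J1 (j1 + h) < 0" using d(2)[OF h(1,2)] z1 by simp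
  then obtain z where z: "j1 + h \<le> z" "z \<le> x" "bessel_J1 z = 0"
    using IVT'[of bessel_J1 "j1 + h" 0 x] n h contJ1 by force
  thus False using nz h x j1 j12 by force
qed

lemma d2: "J1d j2 > 0"
proof -
  have "J1d j2 \<noteq> 0"
  proof
    assume "J1d j2 = 0"
    hence "bessel_J1 ((j1+j2)/2) = 0" using simple_zero[of j2 "(j1+j2)/2"] j1 j12 z2 by simp
    thus False using neg[of "(j1+j2)/2"] j12 by simp
  qed
  moreover have "\<not> J1d j2 < 0"
  proof
    assume "J1d j2 < 0"
    then obtain d where d: "d > 0" "\<And>h. h > 0 \<Longrightarrow> h < d \<Longrightarrow> bessel_J1 j2 < bessel_J1 (j2 - h)"
      using DERIV_neg_dec_left[OF DJ1[of j2]] by auto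
    define h where "h = min (j2 - j1) d / 2"
    have h: "0 < h" "h < d" "h < j2 - j1" using j12 d by (auto simp: h_def)
    show False using d(2)[OF h(1,2)] neg[of "j2 - h"] h z2 by simp
  qed
  ultimately show ?thesis by linarith
qed

lemma part1:
  assumes mu: "\<mu> > 0" and rho: "\<rho> > (j2 / j1)^2"
  shows "\<exists>\<omega>. j1 * sqrt (\<mu> / \<rho>) < \<omega> \<and> \<omega> < j2 * sqrt (\<mu> / \<rho>) \<and> bessel_det \<mu> \<rho> \<omega> = 0"
proof -
  have r0: "\<rho> > 0" using rho j1 j12 by (smt (verit) zero_le_power2)
  define s where "s = sqrt \<rho>"
  define k where "k = sqrt (1/\<mu>)"
  define c where "c = sqrt (\<mu>/\<rho>)"
  have s0: "s > 0" "k > 0" "c > 0" using r0 mu by (auto simp: s_def k_def c_def)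
  have "sqrt ((j2/j1)^2) < s" unfolding s_def using rho by (rule real_sqrt_less_mono)
  hence sj: "j2/j1 < s" using j1 j12 by simp
  hence sj': "j2 < j1 * s" using j1 by (simp add: divide_less_eq mult.commute)
  have ck: "c * k = 1/s"
  proof -
    have "c * k = sqrt (\<mu>/\<rho> * (1/\<mu>))" by (simp only: c_def k_def real_sqrt_mult)
    also have "\<mu>/\<rho> * (1/\<mu>) = 1/\<rho>" using mu by simp
    finally show ?thesis by (simp add: s_def real_sqrt_divide)
  qed
  have sk: "sqrt (\<rho>/\<mu>) = s * k" unfolding s_def k_def
    by (simp add: real_sqrt_mult[symmetric])
  define F where "F = (\<lambda>w. bessel_J1 (w * k) * ((w * k * s) * J1d (w * k * s)) - bessel_J1 (w * k * s) * ((w * k) * J1d (w * k)))"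
  have det: "bessel_det \<mu> \<rho> \<omega> = F \<omega>" for \<omega>
    unfolding bessel_det_def F_def Let_def J1'_eq sk k_def by (simp add: mult_ac)
  have e1: "j1 * c * k * s = j1" "j1 * c * k = j1 / s" "j2 * c * k * s = j2" "j2 * c * k = j2 / s"
    using ck s0 by (simp_all add: mult.assoc)
  have "j1 * 1 < j1 * s" using sj' j12 by simp
  hence s1: "1 < s" using j1 by (simp only: mult_less_cancel_left_pos)
  have a1: "0 < j1 / s" "j1 / s < j1" using s0 j1 j12 sj' s1 by (auto simp: divide_less_eq) 
  have a2: "0 < j2 / s" "j2 / s < j1" using s0 j1 j12 sj' by (auto simp: divide_less_eq mult.commute)
  have F1: "F (j1 * c) < 0" unfolding F_def using e1 z1 pos[OF a1] d1 j1
    by (simp add: mult_pos_neg)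
  have F2: "F (j2 * c) > 0" unfolding F_def using e1 z2 pos[OF a2] d2 j1 j12
    by simp
  have le: "j1 * c \<le> j2 * c" using j12 s0 by simp
  have cont: "continuous_on {j1*c .. j2*c} F" unfolding F_def by (intro continuous_intros)
  obtain z where z: "j1*c \<le> z" "z \<le> j2*c" "F z = 0" using IVT'[of F "j1*c" 0 "j2*c", OF _ _ le cont] F1 F2 by auto
  have "z \<noteq> j1*c" "z \<noteq> j2*c" using z F1 F2 by auto
  thus ?thesis using z det unfolding c_def by (intro exI[of _ z]) auto
qed

end

lemma part2:
  fixes \<mu> j1 j2 :: real and w :: "real \<Rightarrow> real"
  assumes mu: "\<mu> > 0" and j1: "0 < j1" and j12: "j1 < j2"
    and h: "\<forall>\<rho>. \<rho> > (j2 / j1)^2 \<longrightarrow>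
               j1 * sqrt (\<mu> / \<rho>) < w \<rho> \<and> w \<rho> < j2 * sqrt (\<mu> / \<rho>)
               \<and> bessel_det \<mu> \<rho> (w \<rho>) = 0"
  shows "((\<lambda>\<rho>. \<rho> * (w \<rho>)^4) \<longlongrightarrow> 0) at_top"
proof (rule tendsto_sandwich[where f = "\<lambda>_. 0" and h = "\<lambda>\<rho>. j2^4 * \<mu>^2 / \<rho>"])
  have ev: "eventually (\<lambda>\<rho>. \<rho> > (j2 / j1)^2 \<and> \<rho> > 0) at_top"
    by (intro eventually_conj eventually_gt_at_top)
  show "eventually (\<lambda>\<rho>. 0 \<le> \<rho> * (w \<rho>)^4) at_top"
    using ev by eventually_elim simp
  show "eventually (\<lambda>\<rho>. \<rho> * (w \<rho>)^4 \<le> j2^4 * \<mu>^2 / \<rho>) at_top"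
    using ev
  proof eventually_elim
    case (elim \<rho>)
    have b: "j1 * sqrt (\<mu> / \<rho>) < w \<rho>" "w \<rho> < j2 * sqrt (\<mu> / \<rho>)" using h elim by auto
    have w0: "0 \<le> w \<rho>" using b(1) j1 mu elim
      by (smt (verit) mult_pos_pos real_sqrt_gt_zero divide_pos_pos)
    have "(w \<rho>)^4 \<le> (j2 * sqrt (\<mu> / \<rho>))^4" using w0 b(2) by (intro power_mono) auto
    also have "\<dots> = j2^4 * (sqrt (\<mu> / \<rho>)^2)^2" by (simp add: power_mult_distrib flip: power_mult)
    also have "\<dots> = j2^4 * (\<mu> / \<rho>)^2" using mu elim by simp
    finally have "\<rho> * (w \<rho>)^4 \<le> \<rho> * (j2^4 * (\<mu> / \<rho>)^2)" using elim by simp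
    also have "\<dots> = j2^4 * \<mu>^2 / \<rho>" using elim by (simp add: power2_eq_square field_simps)
    finally show ?case .
  qed
  show "((\<lambda>\<rho>. j2^4 * \<mu>^2 / \<rho>) \<longlongrightarrow> 0) at_top"
    by (rule tendsto_divide_0[OF tendsto_const filterlim_at_top_imp_at_infinity[OF filterlim_ident]])
qed (rule tendsto_const)

theorem mainTheorem5:
  fixes \<mu> j1 j2 :: real
  assumes "\<mu> > 0"
    and "0 < j1" and "j1 < j2"
    and "bessel_J1 j1 = 0" and "bessel_J1 j2 = 0"
    and "\<forall>x. 0 < x \<and> x < j2 \<and> x \<noteq> j1 \<longrightarrow> bessel_J1 x \<noteq> 0"
  shows "(\<forall>\<rho>. \<rho> > (j2 / j1)^2 \<longrightarrow>
            (\<exists>\<omega>. j1 * sqrt (\<mu> / \<rho>) < \<omega> \<and> \<omega> < j2 * sqrt (\<mu> / \<rho>)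
                 \<and> bessel_det \<mu> \<rho> \<omega> = 0))
       \<and> (\<forall>w :: real \<Rightarrow> real.
            (\<forall>\<rho>. \<rho> > (j2 / j1)^2 \<longrightarrow>
               j1 * sqrt (\<mu> / \<rho>) < w \<rho> \<and> w \<rho> < j2 * sqrt (\<mu> / \<rho>)
               \<and> bessel_det \<mu> \<rho> (w \<rho>) = 0)
            \<longrightarrow> ((\<lambda>\<rho>. \<rho> * (w \<rho>)^4) \<longlongrightarrow> 0) at_top)"
proof -
  interpret zeros j1 j2 using assms by unfold_locales auto
  show ?thesis using part1[OF assms(1)] part2[OF assms(1-3)] by blast
qed

end
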